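(* Let $\mathbb{I}$ be a constraint graph (an $E$-graph) and $\mathbb{G}$ an $E$-group compatible with $\mathbb{I}$. If $\mathbb{G}$ is $N$-acyclic and free over $\mathbb{I}$, then $\mathbb{G}$ is $N$-acyclic over $\mathbb{I}$.
   Context: Let $E$ be a finite set. An $E$-group is a group $\mathbb{G}$ with $E\subseteq\mathbb{G}$ generating it, each $e\in E$ satisfying $e\neq1$, $e^2=1$; $[e_1\cdots e_n]_{\mathbb{G}}=e_1\cdots e_n$; $\mathbb{G}[\alpha]$ is the subgroup generated by $\alpha\subseteq E$. An $E$-graph is $(V,(R_e)_{e\in E})$ with each $R_e$ symmetric and each vertex having at most one $R_e$-neighbour; $\pi_e$ swaps $R_e$-neighbours and fixes other vertices, $\pi_{e_1\cdots e_n}=\pi_{e_n}\circ\cdots\circ\pi_{e_1}$. $\mathbb{G}$ is compatible with an $E$-graph if $[w]_{\mathbb{G}}=1$ implies $\pi_w=\mathrm{id}$. A coset cycle of length $n\ge2$ is $(g_i,\alpha_i)_{i\in\mathbb{Z}_n}$, $\alpha_i\subseteq E$, with $g_{i+1}\in g_i\mathbb{G}[\alpha_i]$ and $g_i\mathbb{G}[\alpha_i\cap\alpha_{i-1}]\cap g_{i+1}\mathbb{G}[\alpha_i\cap\alpha_{i+1}]=\emptyset$; $N$-acyclic means none of length $2,\dots,N$. Constraint graph $\mathbb{I}=(S,(R_e))$: for $\alpha\subseteq E$, $s,t\in S$, $\alpha^*[\mathbb{I},s]$ is the set of $w=e_1\cdots e_n\in\alpha^*$ labelling a walk in $\mathbb{I}$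 from $s$ (there are $s=s_0,\dots,s_n$ with $(s_{i-1},s_i)\in R_{e_i}$), $\alpha^*[\mathbb{I},s,t]$ those ending at $t$. $C[\mathbb{I},\alpha,s;g]:=\{g[w]_{\mathbb{G}}:w\in\alpha^*[\mathbb{I},s]\}$. An $\mathbb{I}$-coset cycle of length $n\ge2$ is $(g_i,\alpha_i,s_i)_{i\in\mathbb{Z}_n}$, $\alpha_i\subsetneq E$, $s_i\in S$, with $g_{i+1}=g_i[w]_{\mathbb{G}}$ for some $w\in\alpha_i^*[\mathbb{I},s_i,s_{i+1}]$ and $C[\mathbb{I},\alpha_i\cap\alpha_{i-1},s_i;g_i]\cap C[\mathbb{I},\alpha_i\cap\alpha_{i+1},s_{i+1};g_{i+1}]=\emptyset$; $\mathbb{G}$ is $N$-acyclic over $\mathbb{I}$ if there is none of length $2,\dots,N$. Freeness: for $g\in\mathbb{G}$, $\alpha\subseteq E$, $s\in S$, the map $h:C[\mathbb{I},\alpha,s;g]\to S$ sends $g[w]_{\mathbb{G}}$ ($w\in\alpha^*[\mathbb{I},s]$) to the endpoint of the walk from $s$ labelled $w$ (well defined by compatibility). $C[\mathbb{I},\alpha,s;g]$ is free if for all $g_1,g_2\in C[\mathbb{I},\alpha,s;g]$ and $\alpha_1,\alpha_2\subsetneq\alpha$: $g_1\mathbb{G}[\alpha_1]\cap g_2\mathbb{G}[\alpha_2]\neq\emptyset$ implies $C[\mathbb{I},\alpha_1,h(g_1);g_1]\cap C[\mathbb{I},\alpha_2,h(g_2);g_2]\neq\emptyset$. $\mathbb{G}$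 is free over $\mathbb{I}$ if all $C[\mathbb{I},\alpha,s;g]$ ($\alpha\subseteq E$, $s\in S$, $g\in\mathbb{G}$) are free. *)

theory Defs
  imports "HOL-Algebra.Coset" "HOL-Algebra.Generated_Groups"
begin

definition E_group :: "('g, 'b) monoid_scheme \<Rightarrow> 'g set \<Rightarrow> bool" where
  "E_group G E \<longleftrightarrow> group G \<and> finite E \<and> E \<subseteq> carrier G \<and> generate G E = carrier G \<and>
     (\<forall>e\<in>E. e \<noteq> \<one>\<^bsub>G\<^esub> \<and> e \<otimes>\<^bsub>G\<^esub> e = \<one>\<^bsub>G\<^esub>)"

definition word_eval :: "('g, 'b) monoid_scheme \<Rightarrow> 'g list \<Rightarrow> 'g" where
  "word_eval G w = foldr (\<lambda>e x. e \<otimes>\<^bsub>G\<^esub> x) w \<one>\<^bsub>G\<^esub>"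

definition E_graph :: "'g set \<Rightarrow> 'v set \<Rightarrow> ('g \<Rightarrow> ('v \<times> 'v) set) \<Rightarrow> bool" where
  "E_graph E V R \<longleftrightarrow> (\<forall>e\<in>E. R e \<subseteq> V \<times> V \<and> sym (R e) \<and>
      (\<forall>v u u'. (v, u) \<in> R e \<longrightarrow> (v, u') \<in> R e \<longrightarrow> u = u'))"

definition pi_edge :: "('g \<Rightarrow> ('v \<times> 'v) set) \<Rightarrow> 'g \<Rightarrow> 'v \<Rightarrow> 'v" where
  "pi_edge R e v = (if \<exists>u. (v, u) \<in> R e then (THE u. (v, u) \<in> R e) else v)"

definition pi_word :: "('g \<Rightarrow> ('v \<times> 'v) set) \<Rightarrow> 'g list \<Rightarrow> 'v \<Rightarrow> 'v" where
  "pi_word R w = foldl (\<lambda>f e. pi_edge R e \<circ> f) id w"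

definition compatible :: "('g, 'b) monoid_scheme \<Rightarrow> 'g set \<Rightarrow> ('g \<Rightarrow> ('v \<times> 'v) set) \<Rightarrow> bool" where
  "compatible G E R \<longleftrightarrow> (\<forall>w\<in>lists E. word_eval G w = \<one>\<^bsub>G\<^esub> \<longrightarrow> pi_word R w = id)"

definition coset_cycle ::
  "('g, 'b) monoid_scheme \<Rightarrow> 'g set \<Rightarrow> nat \<Rightarrow> (nat \<Rightarrow> 'g) \<Rightarrow> (nat \<Rightarrow> 'g set) \<Rightarrow> bool" where
  "coset_cycle G E n g \<alpha> \<longleftrightarrow> 2 \<le> n \<and>
     (\<forall>i<n. g i \<in> carrier G \<and> \<alpha> i \<subseteq> E \<and>
        g (Suc i mod n) \<in> g i <#\<^bsub>G\<^esub> generate G (\<alpha> i) \<and>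
        (g i <#\<^bsub>G\<^esub> generate G (\<alpha> i \<inter> \<alpha> ((i + n - 1) mod n))) \<inter>
        (g (Suc i mod n) <#\<^bsub>G\<^esub> generate G (\<alpha> i \<inter> \<alpha> (Suc i mod n))) = {})"

definition N_acyclic :: "('g, 'b) monoid_scheme \<Rightarrow> 'g set \<Rightarrow> nat \<Rightarrow> bool" where
  "N_acyclic G E N \<longleftrightarrow> \<not> (\<exists>n g \<alpha>. 2 \<le> n \<and> n \<le> N \<and> coset_cycle G E n g \<alpha>)"

inductive walk :: "('g \<Rightarrow> ('v \<times> 'v) set) \<Rightarrow> 'v \<Rightarrow> 'g list \<Rightarrow> 'v \<Rightarrow> bool"
  for R where
  walk_Nil: "walk R s [] s"
| walk_Cons: "(s, s') \<in> R e \<Longrightarrow> walk R s' w t \<Longrightarrow> walk R s (e # w) t"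

definition Cset :: "('g, 'b) monoid_scheme \<Rightarrow> ('g \<Rightarrow> ('v \<times> 'v) set) \<Rightarrow> 'g set \<Rightarrow> 'v \<Rightarrow> 'g \<Rightarrow> 'g set" where
  "Cset G R \<alpha> s g = {g \<otimes>\<^bsub>G\<^esub> word_eval G w | w. w \<in> lists \<alpha> \<and> (\<exists>t. walk R s w t)}"

definition I_coset_cycle ::
  "('g, 'b) monoid_scheme \<Rightarrow> 'g set \<Rightarrow> 'v set \<Rightarrow> ('g \<Rightarrow> ('v \<times> 'v) set) \<Rightarrow>
   nat \<Rightarrow> (nat \<Rightarrow> 'g) \<Rightarrow> (nat \<Rightarrow> 'g set) \<Rightarrow> (nat \<Rightarrow> 'v) \<Rightarrow> bool" where
  "I_coset_cycle G E S R n g \<alpha> s \<longleftrightarrow> 2 \<le> n \<and>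
     (\<forall>i<n. g i \<in> carrier G \<and> \<alpha> i \<subset> E \<and> s i \<in> S \<and>
        (\<exists>w. w \<in> lists (\<alpha> i) \<and> walk R (s i) w (s (Suc i mod n)) \<and>
             g (Suc i mod n) = g i \<otimes>\<^bsub>G\<^esub> word_eval G w) \<and>
        Cset G R (\<alpha> i \<inter> \<alpha> ((i + n - 1) mod n)) (s i) (g i) \<inter>
        Cset G R (\<alpha> i \<inter> \<alpha> (Suc i mod n)) (s (Suc i mod n)) (g (Suc i mod n)) = {})"

definition N_acyclic_over ::
  "('g, 'b) monoid_scheme \<Rightarrow> 'g set \<Rightarrow> 'v set \<Rightarrow> ('g \<Rightarrow> ('v \<times> 'v) set) \<Rightarrow> nat \<Rightarrow> bool" where
  "N_acyclic_over G E S R N \<longleftrightarrow>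
     \<not> (\<exists>n g \<alpha> s. 2 \<le> n \<and> n \<le> N \<and> I_coset_cycle G E S R n g \<alpha> s)"

text \<open>The map h : C[I,alpha,s;g] -> S, sending g[w] to the endpoint of the walk from s
labelled w (well defined by compatibility).\<close>
definition hmap :: "('g, 'b) monoid_scheme \<Rightarrow> ('g \<Rightarrow> ('v \<times> 'v) set) \<Rightarrow> 'g set \<Rightarrow> 'v \<Rightarrow> 'g \<Rightarrow> 'g \<Rightarrow> 'v" where
  "hmap G R \<alpha> s g x = (SOME t. \<exists>w. w \<in> lists \<alpha> \<and> walk R s w t \<and> x = g \<otimes>\<^bsub>G\<^esub> word_eval G w)"

definition free_C :: "('g, 'b) monoid_scheme \<Rightarrow> ('g \<Rightarrow> ('v \<times> 'v) set) \<Rightarrow> 'g set \<Rightarrow> 'v \<Rightarrow> 'g \<Rightarrow> bool" where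
  "free_C G R \<alpha> s g \<longleftrightarrow>
     (\<forall>g1\<in>Cset G R \<alpha> s g. \<forall>g2\<in>Cset G R \<alpha> s g. \<forall>\<alpha>1 \<alpha>2. \<alpha>1 \<subset> \<alpha> \<longrightarrow> \<alpha>2 \<subset> \<alpha> \<longrightarrow>
        (g1 <#\<^bsub>G\<^esub> generate G \<alpha>1) \<inter> (g2 <#\<^bsub>G\<^esub> generate G \<alpha>2) \<noteq> {} \<longrightarrow>
        Cset G R \<alpha>1 (hmap G R \<alpha> s g g1) g1 \<inter> Cset G R \<alpha>2 (hmap G R \<alpha> s g g2) g2 \<noteq> {})"

definition free_over :: "('g, 'b) monoid_scheme \<Rightarrow> 'g set \<Rightarrow> 'v set \<Rightarrow> ('g \<Rightarrow> ('v \<times> 'v) set) \<Rightarrow> bool" where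
  "free_over G E S R \<longleftrightarrow> (\<forall>\<alpha>. \<alpha> \<subseteq> E \<longrightarrow> (\<forall>s\<in>S. \<forall>g\<in>carrier G. free_C G R \<alpha> s g))"

end

theory Submission
  imports Defs
begin

lemma pi_word_foldl_gen:
  fixes F :: "'e \<Rightarrow> 'a \<Rightarrow> 'a" and h :: "'a \<Rightarrow> 'a"
  shows "foldl (\<lambda>f e. F e \<circ> f) h w = foldl (\<lambda>f e. F e \<circ> f) id w \<circ> h"
proof (induction w arbitrary: h)
  case Nil then show ?case by simp
next
  case (Cons a w)
  have "foldl (\<lambda>f e. F e \<circ> f) h (a # w) = foldl (\<lambda>f e. F e \<circ> f) (F a \<circ> h) w" by simp
  also have "\<dots> = foldl (\<lambda>f e. F e \<circ> f) id w \<circ> (F a \<circ> h)" by (rule Cons.IH)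
  also have "\<dots> = (foldl (\<lambda>f e. F e \<circ> f) id w \<circ> (F a \<circ> id)) \<circ> h" by (simp only: comp_assoc comp_id)
  also have "foldl (\<lambda>f e. F e \<circ> f) id w \<circ> (F a \<circ> id) = foldl (\<lambda>f e. F e \<circ> f) (F a \<circ> id) w"
    by (rule Cons.IH[symmetric])
  also have "\<dots> = foldl (\<lambda>f e. F e \<circ> f) id (a # w)" by simp
  finally show ?case .
qed

lemma pi_word_foldl:
  fixes R :: "'g \<Rightarrow> ('v \<times> 'v) set" and h :: "'v \<Rightarrow> 'v"
  shows "foldl (\<lambda>f e. pi_edge R e \<circ> f) h w = pi_word R w \<circ> h"
  unfolding pi_word_def by (rule pi_word_foldl_gen)

lemma pi_word_Cons: "pi_word R (e # w) = pi_word R w \<circ> pi_edge R e"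
proof -
  have "pi_word R (e # w) = foldl (\<lambda>f e. pi_edge R e \<circ> f) (pi_edge R e \<circ> id) w"
    by (simp add: pi_word_def)
  also have "\<dots> = pi_word R w \<circ> (pi_edge R e \<circ> id)" by (rule pi_word_foldl)
  finally show ?thesis by simp
qed

lemma pi_word_Nil: "pi_word R [] = id"
  by (simp add: pi_word_def)

lemma walk_pi:
  assumes "walk R s w t" "E_graph E V R" "set w \<subseteq> E"
  shows "pi_word R w s = t"
  using assms
proof (induction rule: walk.induct)
  case (walk_Nil s) then show ?case by (simp add: pi_word_Nil)
next
  case (walk_Cons s s' e w t)
  have eE: "e \<in> E" using walk_Cons.prems(2) by simp
  have uq: "\<forall>u u'. (s, u) \<in> R e \<longrightarrow> (s, u') \<in> R e \<longrightarrow> u = u'"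
    using walk_Cons.prems(1) eE unfolding E_graph_def by blast
  have ex: "\<exists>u. (s, u) \<in> R e" using walk_Cons.hyps(1) by blast
  have th: "(THE u. (s, u) \<in> R e) = s'"
    by (rule the_equality) (use walk_Cons.hyps(1) uq in blast)+
  have "pi_edge R e s = s'"
    unfolding pi_edge_def using ex th by simp
  moreover have "pi_word R w s' = t"
    using walk_Cons.IH walk_Cons.prems by simp
  ultimately show ?case by (simp add: pi_word_Cons)
qed

lemma walk_append:
  assumes "walk R s w t" "walk R t w' u"
  shows "walk R s (w @ w') u"
  using assms
proof (induction rule: walk.induct)
  case (walk_Nil s) then show ?case by simp
next
  case (walk_Cons s s' e w t)
  have "walk R s' (w @ w') u" using walk_Cons.IH walk_Cons.prems by blast
  then show ?case using walk_Cons.hyps(1) by (simp add: walk.walk_Cons)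
qed

lemma walk_rev:
  assumes "walk R s w t" "E_graph E V R" "set w \<subseteq> E"
  shows "walk R t (rev w) s"
  using assms
proof (induction rule: walk.induct)
  case (walk_Nil s) then show ?case by (simp add: walk.walk_Nil)
next
  case (walk_Cons s s' e w t)
  have "(s', s) \<in> R e" using walk_Cons.hyps(1) walk_Cons.prems
    unfolding E_graph_def sym_def by auto
  hence a: "walk R s' [e] s" by (rule walk.walk_Cons[OF _ walk.walk_Nil])
  have b: "walk R t (rev w) s'" using walk_Cons.IH walk_Cons.prems by simp
  show ?case using walk_append[OF b a] by simp
qed

context group
begin

lemma word_eval_carrier: "set w \<subseteq> carrier G \<Longrightarrow> word_eval G w \<in> carrier G"
  by (induction w) (auto simp: word_eval_def)

lemma word_eval_append:
  "set xs \<subseteq> carrier G \<Longrightarrow> set ys \<subseteq> carrier G \<Longrightarrow>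
   word_eval G (xs @ ys) = word_eval G xs \<otimes> word_eval G ys"
proof (induction xs)
  case Nil then show ?case by (simp add: word_eval_def word_eval_carrier[unfolded word_eval_def])
next
  case (Cons a xs)
  then show ?case
    by (simp add: word_eval_def m_assoc word_eval_carrier[unfolded word_eval_def])
qed

lemma word_eval_rev:
  assumes "set w \<subseteq> E" "E \<subseteq> carrier G" "\<forall>e\<in>E. e \<otimes> e = \<one>"
  shows "word_eval G (rev w) = inv (word_eval G w)"
  using assms(1)
proof (induction w)
  case Nil then show ?case by (simp add: word_eval_def)
next
  case (Cons a w)
  have a: "a \<in> carrier G" "a \<otimes> a = \<one>" using Cons.prems assms by auto
  have ia: "inv a = a" using a by (simp add: inv_equality)
  have wc: "word_eval G w \<in> carrier G" using Cons.prems assms word_eval_carrier by auto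
  have "word_eval G (rev (a # w)) = word_eval G (rev w) \<otimes> word_eval G [a]"
    using Cons.prems assms by (simp add: word_eval_append subset_iff)
  also have "\<dots> = inv (word_eval G w) \<otimes> a"
    using Cons a by (simp add: word_eval_def)
  also have "\<dots> = inv (a \<otimes> word_eval G w)"
    using a wc ia by (simp add: inv_mult_group)
  finally show ?case by (simp add: word_eval_def)
qed

lemma word_eval_generate:
  "set w \<subseteq> A \<Longrightarrow> A \<subseteq> carrier G \<Longrightarrow> word_eval G w \<in> generate G A"
proof (induction w)
  case Nil then show ?case by (simp add: word_eval_def generate.one)
next
  case (Cons a w)
  then have "a \<in> generate G A" "word_eval G w \<in> generate G A"
    by (auto intro: generate.incl)
  then show ?case by (simp add: word_eval_def generate.eng)
qed

end

lemma walk_unique: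
  assumes grp: "E_group G E" and gr: "E_graph E V R" and comp: "compatible G E R"
    and w: "walk R s w t" "set w \<subseteq> E" and w': "walk R s w' t'" "set w' \<subseteq> E"
    and eq: "word_eval G w = word_eval G w'"
  shows "t = t'"
proof -
  interpret group G using grp unfolding E_group_def by auto
  have EC: "E \<subseteq> carrier G" and inv: "\<forall>e\<in>E. e \<otimes>\<^bsub>G\<^esub> e = \<one>\<^bsub>G\<^esub>"
    using grp unfolding E_group_def by auto
  have wk: "walk R t' (rev w' @ w) t"
    using walk_append[OF walk_rev[OF w'(1) gr w'(2)] w(1)] by simp
  have st: "set (rev w' @ w) \<subseteq> E" using w w' by auto
  have "word_eval G (rev w' @ w) = inv\<^bsub>G\<^esub> (word_eval G w') \<otimes>\<^bsub>G\<^esub> word_eval G w"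
    using w w' EC by (simp add: word_eval_append word_eval_rev[OF _ EC inv] subset_iff)
  also have "\<dots> = \<one>\<^bsub>G\<^esub>" proof -
    have "word_eval G w' \<in> carrier G" using word_eval_carrier w'(2) EC by auto
    thus ?thesis using eq by simp
  qed
  finally have "pi_word R (rev w' @ w) = id"
    using comp st unfolding compatible_def by (auto simp: lists_eq_set)
  moreover have "pi_word R (rev w' @ w) t' = t" using walk_pi[OF wk gr st] .
  ultimately show ?thesis by simp
qed

lemma hmap_eq:
  assumes grp: "E_group G E" and gr: "E_graph E V R" and comp: "compatible G E R"
    and "\<alpha> \<subseteq> E" and g: "g \<in> carrier G" and w: "w \<in> lists \<alpha>" "walk R s w t"
  shows "hmap G R \<alpha> s g (g \<otimes>\<^bsub>G\<^esub> word_eval G w) = t"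
proof -
  interpret group G using grp unfolding E_group_def by auto
  have EC: "E \<subseteq> carrier G" using grp unfolding E_group_def by auto
  let ?P = "\<lambda>t. \<exists>w'. w' \<in> lists \<alpha> \<and> walk R s w' t \<and> g \<otimes>\<^bsub>G\<^esub> word_eval G w = g \<otimes>\<^bsub>G\<^esub> word_eval G w'"
  have "?P t" using w by auto
  hence "?P (SOME t. ?P t)" by (rule someI)
  then obtain w' where w': "w' \<in> lists \<alpha>" "walk R s w' (SOME t. ?P t)"
    "g \<otimes>\<^bsub>G\<^esub> word_eval G w = g \<otimes>\<^bsub>G\<^esub> word_eval G w'" by blast
  have cw: "word_eval G w \<in> carrier G" using w(1) assms(4) EC by (intro word_eval_carrier) auto
  have cw': "word_eval G w' \<in> carrier G" using w'(1) assms(4) EC by (intro word_eval_carrier) auto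
  have "word_eval G w = word_eval G w'"
    using w'(3) g cw cw' by (metis Units_eq Units_l_cancel)
  hence "t = (SOME t. ?P t)"
    using walk_unique[OF grp gr comp w(2) _ w'(2)] w w' assms(4) by auto
  thus ?thesis unfolding hmap_def by simp
qed

lemma Cset_mem:
  "w \<in> lists \<alpha> \<Longrightarrow> walk R s w t \<Longrightarrow> g \<otimes>\<^bsub>G\<^esub> word_eval G w \<in> Cset G R \<alpha> s g"
  unfolding Cset_def by auto

theorem mainTheorem9:
  fixes G :: "('g, 'b) monoid_scheme" and E :: "'g set"
    and S :: "'v set" and R :: "'g \<Rightarrow> ('v \<times> 'v) set" and N :: nat
  assumes "E_group G E"
    and "E_graph E S R"
    and "compatible G E R"
    and "N_acyclic G E N"
    and "free_over G E S R"
  shows "N_acyclic_over G E S R N"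
proof (rule ccontr)
  note grp = assms(1) and gr = assms(2) and comp = assms(3)
  interpret group G using grp unfolding E_group_def by auto
  have EC: "E \<subseteq> carrier G" and inv: "\<forall>e\<in>E. e \<otimes>\<^bsub>G\<^esub> e = \<one>\<^bsub>G\<^esub>"
    using grp unfolding E_group_def by auto
  assume "\<not> N_acyclic_over G E S R N"
  then obtain n g \<alpha> s where n: "2 \<le> n" "n \<le> N" and cyc: "I_coset_cycle G E S R n g \<alpha> s"
    unfolding N_acyclic_over_def by blast
  have "coset_cycle G E n g \<alpha>"
    unfolding coset_cycle_def
  proof (intro conjI allI impI)
    show "2 \<le> n" by fact
    fix i assume i: "i < n"
    define p where "p = (i + n - 1) mod n"
    define q where "q = Suc i mod n"
    have gi: "g i \<in> carrier G" and ai: "\<alpha> i \<subset> E" and si: "s i \<in> S"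
      and disj: "Cset G R (\<alpha> i \<inter> \<alpha> p) (s i) (g i) \<inter> Cset G R (\<alpha> i \<inter> \<alpha> q) (s q) (g q) = {}"
      using cyc i unfolding I_coset_cycle_def p_def q_def by auto
    obtain w where w: "w \<in> lists (\<alpha> i)" "walk R (s i) w (s q)" "g q = g i \<otimes>\<^bsub>G\<^esub> word_eval G w"
      using cyc i unfolding I_coset_cycle_def q_def by blast
    have aC: "\<alpha> i \<subseteq> carrier G" using ai EC by auto
    have wE: "set w \<subseteq> E" using w(1) ai by auto
    have wc: "word_eval G w \<in> carrier G" using wE EC word_eval_carrier by auto
    show "g i \<in> carrier G" by fact
    show "\<alpha> i \<subseteq> E" using ai by auto
    have wg: "word_eval G w \<in> generate G (\<alpha> i)"
      using w(1) aC word_eval_generate by auto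
    show "g (Suc i mod n) \<in> g i <#\<^bsub>G\<^esub> generate G (\<alpha> i)"
      using w(3) wg unfolding q_def l_coset_def by auto
    have g0: "g i = g i \<otimes>\<^bsub>G\<^esub> word_eval G []" using gi by (simp add: word_eval_def)
    have gq0: "g q = g q \<otimes>\<^bsub>G\<^esub> word_eval G []" using gi w(3) wc by (simp add: word_eval_def)
    have gi_in: "g i \<in> Cset G R \<beta> (s i) (g i)" for \<beta>
      using Cset_mem[of "[]" \<beta> R "s i" "s i" G "g i"] g0 by (simp add: walk.intros)
    have gq_in: "g q \<in> Cset G R \<beta> (s q) (g q)" for \<beta>
      using Cset_mem[of "[]" \<beta> R "s q" "s q" G "g q"] gq0 by (simp add: walk.intros)
    have s1: "\<alpha> i \<inter> \<alpha> p \<subset> \<alpha> i"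
    proof (rule ccontr)
      assume "\<not> ?thesis"
      hence eq: "\<alpha> i \<inter> \<alpha> p = \<alpha> i" by auto
      have "g q \<in> Cset G R (\<alpha> i \<inter> \<alpha> p) (s i) (g i)"
        using eq Cset_mem[OF w(1,2)] w(3) by simp
      thus False using disj gq_in by blast
    qed
    have s2: "\<alpha> i \<inter> \<alpha> q \<subset> \<alpha> i"
    proof (rule ccontr)
      assume "\<not> ?thesis"
      hence eq: "\<alpha> i \<inter> \<alpha> q = \<alpha> i" by auto
      have rw: "walk R (s q) (rev w) (s i)" using walk_rev[OF w(2) gr wE] .
      have "g q \<otimes>\<^bsub>G\<^esub> word_eval G (rev w) = g i"
        using w(3) gi wc by (simp add: word_eval_rev[OF wE EC inv] m_assoc)
      moreover have rl: "rev w \<in> lists (\<alpha> i)" using w(1) by auto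
      ultimately have "g i \<in> Cset G R (\<alpha> i \<inter> \<alpha> q) (s q) (g q)"
        using eq Cset_mem[OF rl rw, of G "g q"] by simp
      thus False using disj gi_in by blast
    qed
    have fr: "free_C G R (\<alpha> i) (s i) (g i)"
      using assms(5) ai si gi unfolding free_over_def by auto
    have h1: "hmap G R (\<alpha> i) (s i) (g i) (g i) = s i"
      using hmap_eq[OF grp gr comp _ gi _ walk_Nil, of "\<alpha> i"] ai g0 by auto
    have h2: "hmap G R (\<alpha> i) (s i) (g i) (g q) = s q"
      using hmap_eq[OF grp gr comp _ gi w(1,2)] ai w(3) by auto
    have q_in: "g q \<in> Cset G R (\<alpha> i) (s i) (g i)"
      using Cset_mem[OF w(1,2)] w(3) by simp
    show "(g i <#\<^bsub>G\<^esub> generate G (\<alpha> i \<inter> \<alpha> ((i + n - 1) mod n))) \<inter>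
          (g (Suc i mod n) <#\<^bsub>G\<^esub> generate G (\<alpha> i \<inter> \<alpha> (Suc i mod n))) = {}"
    proof (rule ccontr)
      assume "\<not> ?thesis"
      hence "(g i <#\<^bsub>G\<^esub> generate G (\<alpha> i \<inter> \<alpha> p)) \<inter> (g q <#\<^bsub>G\<^esub> generate G (\<alpha> i \<inter> \<alpha> q)) \<noteq> {}"
        unfolding p_def q_def .
      hence "Cset G R (\<alpha> i \<inter> \<alpha> p) (hmap G R (\<alpha> i) (s i) (g i) (g i)) (g i) \<inter>
             Cset G R (\<alpha> i \<inter> \<alpha> q) (hmap G R (\<alpha> i) (s i) (g i) (g q)) (g q) \<noteq> {}"
        using fr[unfolded free_C_def, rule_format, OF gi_in[of "\<alpha> i"] q_in s1 s2] by blast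
      hence "Cset G R (\<alpha> i \<inter> \<alpha> p) (s i) (g i) \<inter> Cset G R (\<alpha> i \<inter> \<alpha> q) (s q) (g q) \<noteq> {}"
        unfolding h1 h2 .
      thus False using disj by simp
    qed
  qed
  thus False using assms(4) n unfolding N_acyclic_def by blast
qed

end
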